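(* Assume the standing hypotheses (H). Then $\alpha(G)\le 4$, i.e., every part of $G$ has at most $4$ vertices.
   Context: $\alpha(G)$ is the independence number. A list assignment $L$ assigns to each vertex $v$ a set $L(v)$ of colors; an $L$-coloring is a proper coloring $f$ with $f(v)\in L(v)$ for all $v$; $\mathrm{ch}$ denotes choice number and $\chi$ chromatic number. A part of a complete multipartite graph is one of its maximal stable sets. Standing hypotheses (H): $k\ge1$ and $n\ge 2k+2$ are integers; $G$ is a complete $k$-partite graph (exactly $k$ nonempty parts) on $n$ vertices; $L$ is a list assignment for $G$ with $|L(v)|\ge\lceil (n+k-1)/3\rceil$ for every vertex $v$; $G$ has no $L$-coloring; $\left|\bigcup_{v\in V(G)}L(v)\right|\le n-1$; and every graph $H$ with fewer than $n$ vertices satisfies $\mathrm{ch}(H)\le\max\{\chi(H),\lceil(|V(H)|+\chi(H)-1)/3\rceil\}$. *)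

theory Defs
  imports Complex_Main "HOL-Library.Disjoint_Sets"
begin

definition graph :: "'a set \<Rightarrow> ('a \<Rightarrow> 'a \<Rightarrow> bool) \<Rightarrow> bool" where
  "graph V E \<longleftrightarrow> finite V \<and> (\<forall>u v. E u v \<longrightarrow> u \<in> V \<and> v \<in> V \<and> u \<noteq> v \<and> E v u)"

definition proper_coloring :: "'a set \<Rightarrow> ('a \<Rightarrow> 'a \<Rightarrow> bool) \<Rightarrow> ('a \<Rightarrow> 'c) \<Rightarrow> bool" where
  "proper_coloring V E f \<longleftrightarrow> (\<forall>u\<in>V. \<forall>v\<in>V. E u v \<longrightarrow> f u \<noteq> f v)"

definition L_coloring :: "'a set \<Rightarrow> ('a \<Rightarrow> 'a \<Rightarrow> bool) \<Rightarrow> ('a \<Rightarrow> 'c set) \<Rightarrow> ('a \<Rightarrow> 'c) \<Rightarrow> bool" where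
  "L_coloring V E L f \<longleftrightarrow> proper_coloring V E f \<and> (\<forall>v\<in>V. f v \<in> L v)"

definition colorable :: "'a set \<Rightarrow> ('a \<Rightarrow> 'a \<Rightarrow> bool) \<Rightarrow> nat \<Rightarrow> bool" where
  "colorable V E k \<longleftrightarrow> (\<exists>f :: 'a \<Rightarrow> nat. proper_coloring V E f \<and> f ` V \<subseteq> {..<k})"

definition chromatic_number :: "'a set \<Rightarrow> ('a \<Rightarrow> 'a \<Rightarrow> bool) \<Rightarrow> nat" where
  "chromatic_number V E = (LEAST k. colorable V E k)"

definition choosable :: "'a set \<Rightarrow> ('a \<Rightarrow> 'a \<Rightarrow> bool) \<Rightarrow> nat \<Rightarrow> bool" where
  "choosable V E k \<longleftrightarrow> (\<forall>L :: 'a \<Rightarrow> nat set. (\<forall>v\<in>V. finite (L v) \<and> card (L v) \<ge> k) \<longrightarrow>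
      (\<exists>f. L_coloring V E L f))"

definition choice_number :: "'a set \<Rightarrow> ('a \<Rightarrow> 'a \<Rightarrow> bool) \<Rightarrow> nat" where
  "choice_number V E = (LEAST k. choosable V E k)"

definition independent_set :: "'a set \<Rightarrow> ('a \<Rightarrow> 'a \<Rightarrow> bool) \<Rightarrow> 'a set \<Rightarrow> bool" where
  "independent_set V E S \<longleftrightarrow> S \<subseteq> V \<and> (\<forall>u\<in>S. \<forall>v\<in>S. \<not> E u v)"

definition independence_number :: "'a set \<Rightarrow> ('a \<Rightarrow> 'a \<Rightarrow> bool) \<Rightarrow> nat" where
  "independence_number V E = Max (card ` {S. independent_set V E S})"

definition complete_multipartite ::
  "'a set \<Rightarrow> ('a \<Rightarrow> 'a \<Rightarrow> bool) \<Rightarrow> 'a set set \<Rightarrow> bool" where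
  "complete_multipartite V E P \<longleftrightarrow> graph V E \<and> partition_on V P \<and>
     (\<forall>u\<in>V. \<forall>v\<in>V. E u v \<longleftrightarrow> \<not> (\<exists>X\<in>P. u \<in> X \<and> v \<in> X))"

end

theory Submission
  imports Defs
begin

lemma greedy:
  fixes E :: "'a \<Rightarrow> 'a \<Rightarrow> bool" and L :: "'a \<Rightarrow> 'c set" and W :: "'a set"
  assumes irr: "\<forall>v. \<not> E v v"
  shows "finite W \<Longrightarrow> (\<forall>v\<in>W. finite (L v) \<and> card (L v) \<ge> card W) \<Longrightarrow> \<exists>f. L_coloring W E L f"
proof (induction W rule: finite_induct)
  case empty
  then show ?case by (auto simp: L_coloring_def proper_coloring_def)
next
  case (insert x F)
  have cF: "card (insert x F) = Suc (card F)" using insert by simp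
  have "\<forall>v\<in>F. finite (L v) \<and> card (L v) \<ge> card F" using insert.prems cF by force
  then obtain f where f: "L_coloring F E L f" using insert.IH by blast
  have "card (f ` F) \<le> card F" by (rule card_image_le) (fact insert.hyps(1))
  moreover have "card (L x) \<ge> Suc (card F)" "finite (L x)" using insert.prems cF by auto
  ultimately have "\<not> L x \<subseteq> f ` F"
    by (meson card_mono finite_imageI insert.hyps(1) le_trans not_less_eq_eq)
  then obtain c where c: "c \<in> L x" "c \<notin> f ` F" by blast
  have "L_coloring (insert x F) E L (f(x := c))"
    unfolding L_coloring_def proper_coloring_def
  proof (intro conjI ballI impI)
    fix u w assume u: "u \<in> insert x F" and w: "w \<in> insert x F" and e: "E u w"
    have uw: "u \<noteq> w" using e irr by blast
    show "(f(x := c)) u \<noteq> (f(x := c)) w"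
    proof (cases "u = x")
      case True
      then have "w \<in> F" using w uw True by blast
      then show ?thesis using True c(2) insert.hyps(2) by auto
    next
      case False
      then have uF: "u \<in> F" using u by blast
      show ?thesis
      proof (cases "w = x")
        case True then show ?thesis using uF c(2) False insert.hyps(2) by auto
      next
        case False2: False
        then have "w \<in> F" using w by blast
        then show ?thesis using uF f e False False2 unfolding L_coloring_def proper_coloring_def by auto
      qed
    qed
  next
    fix v assume "v \<in> insert x F"
    then show "(f(x := c)) v \<in> L v" using f c insert.hyps(2) unfolding L_coloring_def by auto
  qed
  then show ?case by blast
qed

lemma choosable_mono: "choosable V E a \<Longrightarrow> a \<le> b \<Longrightarrow> choosable V E b"
  unfolding choosable_def by (meson le_trans)

lemma choosable_choice: assumes "graph V E" shows "choosable V E (choice_number V E)"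
proof -
  have irr: "\<forall>v. \<not> E v v" using assms unfolding graph_def by blast
  have fin: "finite V" using assms unfolding graph_def by blast
  have "choosable V E (card V)" unfolding choosable_def
  proof (intro allI impI)
    fix L :: "'a \<Rightarrow> nat set"
    assume "\<forall>v\<in>V. finite (L v) \<and> card V \<le> card (L v)"
    then show "\<exists>f. L_coloring V E L f" using greedy[where E=E and L=L and W=V] irr fin by blast
  qed
  then show ?thesis unfolding choice_number_def by (rule LeastI)
qed

lemma dc:
  assumes "finite Y" "finite C" "\<forall>v\<in>Y. L v \<subseteq> C"
  shows "(\<Sum>v\<in>Y. card (L v)) = (\<Sum>c\<in>C. card {v\<in>Y. c \<in> L v})"
proof -
  have "\<forall>v\<in>Y. card (L v) = (\<Sum>c\<in>C. if c \<in> L v then 1 else 0)"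
  proof
    fix v assume v: "v \<in> Y"
    have "L v = {c\<in>C. c \<in> L v}" using v assms by auto
    then have "card (L v) = (\<Sum>c\<in>{c\<in>C. c \<in> L v}. 1)" by (metis card_eq_sum)
    also have "\<dots> = (\<Sum>c\<in>C. if c \<in> L v then 1 else 0)" using assms(2) by (rule sum.inter_filter)
    finally show "card (L v) = (\<Sum>c\<in>C. if c \<in> L v then 1 else 0)" .
  qed
  then have "(\<Sum>v\<in>Y. card (L v)) = (\<Sum>v\<in>Y. \<Sum>c\<in>C. if c \<in> L v then 1 else 0)"
    by (intro sum.cong refl) blast
  also have "\<dots> = (\<Sum>c\<in>C. \<Sum>v\<in>Y. if c \<in> L v then 1 else 0)" by (rule sum.swap)
  also have "\<dots> = (\<Sum>c\<in>C. card {v\<in>Y. c \<in> L v})"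
  proof (rule sum.cong[OF refl])
    fix c assume "c \<in> C"
    have "card {v\<in>Y. c \<in> L v} = (\<Sum>v\<in>{v\<in>Y. c \<in> L v}. 1)" by (rule card_eq_sum)
    also have "\<dots> = (\<Sum>v\<in>Y. if c \<in> L v then 1 else 0)" using assms(1) by (rule sum.inter_filter)
    finally show "(\<Sum>v\<in>Y. if c \<in> L v then 1 else 0) = card {v\<in>Y. c \<in> L v}" by simp
  qed
  finally show ?thesis .
qed

theorem lemma13:
  fixes V :: "'a set" and E :: "'a \<Rightarrow> 'a \<Rightarrow> bool" and P :: "'a set set"
    and L :: "'a \<Rightarrow> 'c set" and k n :: nat
  assumes k: "k \<ge> 1"
    and n: "n \<ge> 2 * k + 2"
    and G: "complete_multipartite V E P"
    and parts: "card P = k"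
    and nV: "card V = n"
    and lists: "\<forall>v\<in>V. finite (L v) \<and> int (card (L v)) \<ge> \<lceil>(real n + real k - 1) / 3\<rceil>"
    and noncol: "\<not> (\<exists>f. L_coloring V E L f)"
    and union: "card (\<Union>v\<in>V. L v) \<le> n - 1"
    and minimal: "\<forall>(V' :: 'a set) E'. graph V' E' \<and> card V' < n \<longrightarrow>
        choice_number V' E' \<le> max (chromatic_number V' E')
          (nat \<lceil>(real (card V') + real (chromatic_number V' E') - 1) / 3\<rceil>)"
  shows "independence_number V E \<le> 4 \<and> (\<forall>X\<in>P. card X \<le> 4)"
proof -
  have graph: "graph V E" and part: "partition_on V P"
    and adj: "\<forall>u\<in>V. \<forall>v\<in>V. E u v \<longleftrightarrow> \<not> (\<exists>X\<in>P. u \<in> X \<and> v \<in> X)"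
    using G unfolding complete_multipartite_def by auto
  have finV: "finite V" using graph unfolding graph_def by auto
  have Vun: "V = \<Union>P" using part by (rule partition_onD1)
  have disj: "disjoint P" using part by (rule partition_onD2)
  have finP: "finite P" using finV Vun by (simp add: finite_UnionD)
  have partsub: "\<forall>X\<in>P. X \<subseteq> V \<and> finite X" using Vun finV by (auto intro: finite_subset)
  define q where "q = \<lceil>(real n + real k - 1) / 3\<rceil>"
  have "(real n + real k - 1) / 3 \<le> real_of_int q" unfolding q_def by (rule le_of_int_ceiling)
  then have "real_of_int (int n + int k - 1) \<le> real_of_int (3 * q)" by simp
  then have q3: "int n + int k - 1 \<le> 3 * q" by (simp only: of_int_le_iff)
  define C where "C = (\<Union>v\<in>V. L v)"
  have finC: "finite C" using finV lists unfolding C_def by auto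
  have cardC: "card C \<le> n - 1" using union unfolding C_def .
  have Lsub: "\<forall>v\<in>V. L v \<subseteq> C" unfolding C_def by auto
  have Lq: "\<forall>v\<in>V. card (L v) \<ge> nat q" using lists unfolding q_def by (auto simp: nat_le_iff)
  have key: "\<forall>X\<in>P. \<forall>c. card {v\<in>X. c \<in> L v} \<le> 2"
  proof (intro ballI allI, rule ccontr)
    fix X c assume X: "X \<in> P" and nc: "\<not> card {v\<in>X. c \<in> L v} \<le> 2"
    then have "3 \<le> card {v\<in>X. c \<in> L v}" by simp
    then obtain T where T: "T \<subseteq> {v\<in>X. c \<in> L v}" "card T = 3" by (meson obtain_subset_with_card_n)
    then obtain x1 x2 x3 where T3: "T = {x1,x2,x3}" "x1 \<noteq> x2" "x2 \<noteq> x3" "x1 \<noteq> x3"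
      by (auto simp: card_3_iff)
    have xs: "x1 \<in> X" "x2 \<in> X" "x3 \<in> X" "c \<in> L x1" "c \<in> L x2" "c \<in> L x3" using T T3 by auto
    have XV: "X \<subseteq> V" using partsub X by auto
    define V' where "V' = V - {x1,x2,x3}"
    define E' where "E' = (\<lambda>u v. E u v \<and> u \<in> V' \<and> v \<in> V')"
    have gV': "graph V' E'" using graph unfolding graph_def V'_def E'_def by auto
    have c3: "card {x1,x2,x3} = 3" using T3 by simp
    have n3: "n \<ge> 3" using n k by simp
    have cV': "card V' = n - 3"
      using card_Diff_subset[of "{x1,x2,x3}" V] xs XV nV c3 unfolding V'_def by auto
    have ltn: "card V' < n" using cV' n3 by simp
    obtain h where h: "bij_betw h P {0..<card P}" using ex_bij_betw_finite_nat[OF finP] by blast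
    define col where "col = (\<lambda>u. h (SOME Y. Y \<in> P \<and> u \<in> Y))"
    have someP: "(SOME Y. Y \<in> P \<and> u \<in> Y) \<in> P \<and> u \<in> (SOME Y. Y \<in> P \<and> u \<in> Y)" if "u \<in> V" for u
    proof -
      have "\<exists>Y. Y \<in> P \<and> u \<in> Y" using that Vun by auto
      then show ?thesis by (rule someI_ex)
    qed
    have colok: "colorable V' E' k" unfolding colorable_def
    proof (intro exI conjI)
      show "proper_coloring V' E' col" unfolding proper_coloring_def
      proof (intro ballI impI)
        fix u w assume u: "u \<in> V'" and w: "w \<in> V'" and e: "E' u w"
        have uV: "u \<in> V" "w \<in> V" using u w V'_def by auto
        have Yu: "(SOME Y. Y \<in> P \<and> u \<in> Y) \<in> P \<and> u \<in> (SOME Y. Y \<in> P \<and> u \<in> Y)" using someP uV by blast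
        have Yw: "(SOME Y. Y \<in> P \<and> w \<in> Y) \<in> P \<and> w \<in> (SOME Y. Y \<in> P \<and> w \<in> Y)" using someP uV by blast
        have "\<not> (\<exists>X\<in>P. u \<in> X \<and> w \<in> X)" using adj uV e E'_def by auto
        then have "(SOME Y. Y \<in> P \<and> u \<in> Y) \<noteq> (SOME Y. Y \<in> P \<and> w \<in> Y)" using Yu Yw by auto
        then show "col u \<noteq> col w" unfolding col_def using h Yu Yw unfolding bij_betw_def inj_on_def by blast
      qed
      show "col ` V' \<subseteq> {..<k}"
      proof
        fix a assume "a \<in> col ` V'"
        then obtain u where u: "u \<in> V'" "a = col u" by blast
        have sP: "(SOME Y. Y \<in> P \<and> u \<in> Y) \<in> P" using someP u V'_def by auto
        have "col u \<in> {0..<card P}" unfolding col_def by (rule bij_betw_apply[OF h sP])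
        then show "a \<in> {..<k}" using u parts by auto
      qed
    qed
    have chi: "chromatic_number V' E' \<le> k" unfolding chromatic_number_def using colok by (rule Least_le)
    define \<chi> where "\<chi> = chromatic_number V' E'"
    have m: "choice_number V' E' \<le> max \<chi> (nat \<lceil>(real (card V') + real \<chi> - 1) / 3\<rceil>)"
      using minimal gV' ltn unfolding \<chi>_def by blast
    have kq: "int k \<le> q - 1" using q3 n by linarith
    have m1: "\<chi> \<le> nat (q - 1)" using chi kq unfolding \<chi>_def by linarith
    have "real (card V') + real \<chi> - 1 \<le> 3 * (real_of_int q - 1)"
    proof -
      have "real (card V') = real n - 3" using cV' n3 by simp
      moreover have "real \<chi> \<le> real k" using chi unfolding \<chi>_def by simp
      moreover have "real n + real k - 1 \<le> 3 * real_of_int q"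
        using \<open>(real n + real k - 1) / 3 \<le> real_of_int q\<close> by simp
      ultimately have "real (card V') + real \<chi> - 1 \<le> 3 * real_of_int q - 3" by linarith
      then show ?thesis by (simp add: algebra_simps)
    qed
    then have "(real (card V') + real \<chi> - 1) / 3 \<le> real_of_int (q - 1)" by simp
    then have "\<lceil>(real (card V') + real \<chi> - 1) / 3\<rceil> \<le> q - 1" by (simp only: ceiling_le_iff)
    then have m2: "nat \<lceil>(real (card V') + real \<chi> - 1) / 3\<rceil> \<le> nat (q - 1)" by (rule nat_mono)
    have cn: "choice_number V' E' \<le> nat (q - 1)" by (rule le_trans[OF m max.boundedI[OF m1 m2]])
    have ch: "choosable V' E' (nat (q - 1))" using choosable_mono[OF choosable_choice[OF gV'] cn] .
    obtain g :: "'c \<Rightarrow> nat" and N where g: "g ` C = {i. i < N}" "inj_on g C" using finite_imp_inj_to_nat_seg[OF finC] by blast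
    define L' where "L' = (\<lambda>v. g ` (L v - {c}))"
    have "\<forall>v\<in>V'. finite (L' v) \<and> card (L' v) \<ge> nat (q - 1)"
    proof
      fix v assume v: "v \<in> V'"
      then have vV: "v \<in> V" by (simp add: V'_def)
      have fin: "finite (L v)" using lists vV by auto
      have "inj_on g (L v - {c})" by (rule inj_on_subset[OF g(2)]) (use Lsub vV in auto)
      then have "card (L' v) = card (L v - {c})" unfolding L'_def by (rule card_image)
      moreover have "card (L v) - card {c} \<le> card (L v - {c})" by (rule diff_card_le_card_Diff) simp
      moreover have "nat q \<le> card (L v)" using Lq vV by auto
      moreover have "nat (q - 1) = nat q - 1" using kq by (simp add: nat_diff_distrib')
      moreover have "card {c} = 1" by simp
      ultimately have "nat (q - 1) \<le> card (L' v)" by linarith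
      then show "finite (L' v) \<and> card (L' v) \<ge> nat (q - 1)" unfolding L'_def using fin by simp
    qed
    moreover have "(\<forall>v\<in>V'. finite (L' v) \<and> card (L' v) \<ge> nat (q - 1)) \<longrightarrow> (\<exists>f :: 'a \<Rightarrow> nat. L_coloring V' E' L' f)"
      using ch unfolding choosable_def by (rule spec)
    ultimately have "\<exists>f :: 'a \<Rightarrow> nat. L_coloring V' E' L' f" by (rule rev_mp)
    then obtain f' where f': "L_coloring V' E' L' f'" by blast
    define f where "f = (\<lambda>v. if v \<in> {x1,x2,x3} then c else inv_into C g (f' v))"
    have memb: "\<exists>y. y \<in> L v - {c} \<and> f' v = g y \<and> f v = y" if v: "v \<in> V'" for v
    proof -
      have "f' v \<in> L' v" using f' v unfolding L_coloring_def by auto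
      then obtain y where y: "y \<in> L v - {c}" "f' v = g y" unfolding L'_def by auto
      have "y \<in> C" using y Lsub v V'_def by auto
      then have "inv_into C g (g y) = y" using g(2) by (simp add: inv_into_f_f)
      moreover have "v \<notin> {x1,x2,x3}" using v V'_def by auto
      ultimately have "f v = y" unfolding f_def using y by simp
      then show ?thesis using y by blast
    qed
    have "L_coloring V E L f"
      unfolding L_coloring_def proper_coloring_def
    proof (intro conjI ballI impI)
      fix v assume v: "v \<in> V"
      show "f v \<in> L v"
      proof (cases "v \<in> {x1,x2,x3}")
        case True then show ?thesis using xs unfolding f_def by auto
      next
        case False then have "v \<in> V'" using v V'_def by auto
        then show ?thesis using memb by auto
      qed
    next
      fix u w assume u: "u \<in> V" and w: "w \<in> V" and e: "E u w"
      show "f u \<noteq> f w"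
      proof (cases "u \<in> {x1,x2,x3}")
        case True
        show ?thesis
        proof (cases "w \<in> {x1,x2,x3}")
          case True2: True
          have "u \<in> X" "w \<in> X" using True True2 xs by auto
          then show ?thesis using adj u w e X by auto
        next
          case False
          then have "w \<in> V'" using w V'_def by auto
          then show ?thesis using memb[of w] True unfolding f_def by auto
        qed
      next
        case False
        then have uV': "u \<in> V'" using u V'_def by auto
        show ?thesis
        proof (cases "w \<in> {x1,x2,x3}")
          case True
          then show ?thesis using memb[OF uV'] False unfolding f_def by auto
        next
          case False2: False
          then have wV': "w \<in> V'" using w V'_def by auto
          have "f' u \<noteq> f' w" using f' uV' wV' e unfolding L_coloring_def proper_coloring_def E'_def by auto
          then show ?thesis using memb[OF uV'] memb[OF wV'] by auto
        qed
      qed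
    qed
    then show False using noncol by blast
  qed
  have partsum: "(\<Sum>v\<in>X. card (L v)) \<le> 2 * (n - 1)" if X: "X \<in> P" for X
  proof -
    have "(\<Sum>v\<in>X. card (L v)) = (\<Sum>c\<in>C. card {v\<in>X. c \<in> L v})"
      by (rule dc) (use partsub Lsub X finC in auto)
    also have "\<dots> \<le> (\<Sum>c\<in>C. 2)" by (rule sum_mono) (use key X in auto)
    also have "\<dots> = 2 * card C" by simp
    also have "\<dots> \<le> 2 * (n - 1)" using cardC by simp
    finally show ?thesis .
  qed
  have partlow: "card X * nat q \<le> (\<Sum>v\<in>X. card (L v))" if X: "X \<in> P" for X
  proof -
    have "(\<Sum>v\<in>X. nat q) \<le> (\<Sum>v\<in>X. card (L v))" by (rule sum_mono) (use Lq partsub X in auto)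
    then show ?thesis by simp
  qed
  have total: "(\<Sum>v\<in>V. card (L v)) = (\<Sum>X\<in>P. \<Sum>v\<in>X. card (L v))"
    unfolding Vun
    by (subst sum.Union_disjoint) (use partsub disjointD[OF disj] Vun in auto)
  also have "\<dots> \<le> (\<Sum>X\<in>P. 2 * (n - 1))" by (rule sum_mono) (rule partsum)
  also have "\<dots> = k * (2 * (n - 1))" using parts by simp
  finally have up: "(\<Sum>v\<in>V. card (L v)) \<le> k * (2 * (n - 1))" .
  have "(\<Sum>v\<in>V. nat q) \<le> (\<Sum>v\<in>V. card (L v))" by (rule sum_mono) (use Lq in auto)
  then have low: "n * nat q \<le> (\<Sum>v\<in>V. card (L v))" using nV by simp
  define Q where "Q = nat q"
  have Q3: "n + k - 1 \<le> 3 * Q" using q3 k unfolding Q_def by linarith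
  have nQ: "n * Q \<le> k * (2 * (n - 1))" using up low unfolding Q_def by linarith
  have "k * (2 * (n - 1)) < n * (2 * k)" using k n by (simp add: algebra_simps)
  then have "n * Q < n * (2 * k)" using nQ by linarith
  then have Qk: "Q < 2 * k" by simp
  have P4: "\<forall>X\<in>P. card X \<le> 4"
  proof (rule ballI, rule ccontr)
    fix X assume X: "X \<in> P" and c: "\<not> card X \<le> 4"
    have "5 * Q \<le> card X * Q" using c by simp
    also have "\<dots> \<le> 2 * (n - 1)" using partlow[OF X] partsum[OF X] unfolding Q_def by linarith
    finally have "5 * Q \<le> 2 * (n - 1)" .
    then show False using Q3 Qk n k by linarith
  qed
  have ind: "card S \<le> 4" if S: "independent_set V E S" for S
  proof (cases "S = {}")
    case True then show ?thesis by simp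
  next
    case False
    then obtain u where u: "u \<in> S" by blast
    have SV: "S \<subseteq> V" using S unfolding independent_set_def by auto
    then obtain X where X: "X \<in> P" "u \<in> X" using u Vun by auto
    have "S \<subseteq> X"
    proof
      fix w assume w: "w \<in> S"
      show "w \<in> X"
      proof (cases "w = u")
        case True then show ?thesis using X by simp
      next
        case False
        have "\<not> E u w" using S u w unfolding independent_set_def by auto
        have uwV: "u \<in> V" "w \<in> V" using u w SV by auto
        have "\<exists>Y\<in>P. u \<in> Y \<and> w \<in> Y" using adj uwV \<open>\<not> E u w\<close> by blast
        then obtain Y where Y: "Y \<in> P" "u \<in> Y" "w \<in> Y" by blast
        then have "Y = X" using disjointD[OF disj Y(1) X(1)] X by auto
        then show ?thesis using Y by simp
      qed
    qed
    then have "card S \<le> card X" using partsub X by (auto intro: card_mono)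
    then show ?thesis using P4 X by auto
  qed
  have fin: "finite (card ` {S. independent_set V E S})"
  proof -
    have "{S. independent_set V E S} \<subseteq> Pow V" unfolding independent_set_def by auto
    then have "finite {S. independent_set V E S}" using finV by (auto intro: finite_subset)
    then show ?thesis by simp
  qed
  have ne: "card ` {S. independent_set V E S} \<noteq> {}"
    using independent_set_def[of V E "{}"] by auto
  have "independence_number V E \<le> 4"
    unfolding independence_number_def using fin ne ind by (auto simp: Max_le_iff)
  then show ?thesis using P4 by simp
qed

end
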